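(* For every positive integer $h$ there are $\eta=\eta(h)>0$ and $\alpha=\alpha(h)>0$ such that the following holds for every oriented graph $H$ on $h$ vertices. Let $H_1,\dots,H_\ell$ be a partition of $V(H)$ such that each $H_i$ induces an acyclic digraph and for every $1\le i<j\le\ell$ either $H_i\rightarrow H_j$ or $H_j\rightarrow H_i$. Let $W_1,\dots,W_\ell$ be pairwise disjoint vertex sets in a tournament $T$ such that (1) $|W_i|\ge 2^{h-1}$ for every $1\le i\le\ell$, and (2) for every $1\le i\ne j\le\ell$, if $H_i\rightarrow H_j$ then $d(W_i,W_j)\ge 1-\eta$. Then $T$ contains at least $\alpha\cdot\prod_{i=1}^{\ell}|W_i|^{h_i}$ copies of $H$, where $h_i=|H_i|$.
   Context: An oriented graph is a directed graph without loops with at most one edge between any two distinct vertices. For disjoint vertex sets $X,Y$ of a digraph, $X\rightarrow Y$ means there is no pair $(x,y)\in X\times Y$ with an edge from $y$ to $x$. For disjoint $X,Y\subseteq V(T)$ in a tournament $T$, $d(X,Y)$ is the fraction of pairs $(x,y)\in X\times Y$ with $(x,y)\in E(T)$. A copy of $H$ is a (not necessarily induced) subgraph isomorphic to $H$. *)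

theory Defs imports Complex_Main begin

definition oriented_graph :: "'a set \<Rightarrow> ('a \<times> 'a) set \<Rightarrow> bool" where
  "oriented_graph V E \<longleftrightarrow> E \<subseteq> V \<times> V \<and> (\<forall>x. (x, x) \<notin> E)
     \<and> (\<forall>x y. (x, y) \<in> E \<longrightarrow> (y, x) \<notin> E)"

definition tournament :: "'a set \<Rightarrow> ('a \<times> 'a) set \<Rightarrow> bool" where
  "tournament V E \<longleftrightarrow> finite V \<and> oriented_graph V E
     \<and> (\<forall>x\<in>V. \<forall>y\<in>V. x \<noteq> y \<longrightarrow> (x, y) \<in> E \<or> (y, x) \<in> E)"

definition arr :: "('a \<times> 'a) set \<Rightarrow> 'a set \<Rightarrow> 'a set \<Rightarrow> bool" where
  "arr E X Y \<longleftrightarrow> (\<forall>x\<in>X. \<forall>y\<in>Y. (y, x) \<notin> E)"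

definition dens :: "('a \<times> 'a) set \<Rightarrow> 'a set \<Rightarrow> 'a set \<Rightarrow> real" where
  "dens E X Y = real (card {p \<in> X \<times> Y. p \<in> E}) / (real (card X) * real (card Y))"

definition induces_acyclic :: "('a \<times> 'a) set \<Rightarrow> 'a set \<Rightarrow> bool" where
  "induces_acyclic E X \<longleftrightarrow> acyclic (E \<inter> (X \<times> X))"

definition copies :: "'a set \<Rightarrow> ('a \<times> 'a) set \<Rightarrow> 'b set \<Rightarrow> ('b \<times> 'b) set
    \<Rightarrow> ('b set \<times> ('b \<times> 'b) set) set" where
  "copies VH EH VT ET = {(V', E'). \<exists>f. inj_on f VH \<and> f ` VH \<subseteq> VT
      \<and> (\<forall>(u, v)\<in>EH. (f u, f v) \<in> ET)
      \<and> V' = f ` VH \<and> E' = (\<lambda>(u, v). (f u, f v)) ` EH}"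

end

theory Submission imports Defs "HOL-Library.FuncSet" begin


lemma source_exists:
  assumes "finite X" "acyclic (E \<inter> X \<times> X)" "z0 \<in> X"
  shows "\<exists>z\<in>X. \<forall>y\<in>X. (y, z) \<notin> E"
proof -
  have "finite (E \<inter> X \<times> X)" using assms(1) by (meson finite_SigmaI finite_subset inf_le2)
  then have "wf (E \<inter> X \<times> X)" using assms(2) by (rule finite_acyclic_wf)
  then obtain z where "z \<in> X" "\<And>y. (y, z) \<in> E \<inter> X \<times> X \<Longrightarrow> y \<notin> X"
    using wfE_min assms(3) by metis
  then show ?thesis by blast
qed

lemma sink_exists:
  assumes "finite X" "acyclic (E \<inter> X \<times> X)" "z0 \<in> X"
  shows "\<exists>z\<in>X. \<forall>y\<in>X. (z, y) \<notin> E"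
proof -
  have "finite (E \<inter> X \<times> X)" using assms(1) by (meson finite_SigmaI finite_subset inf_le2)
  then have "wf ((E \<inter> X \<times> X)\<inverse>)" using assms(2) by (rule finite_acyclic_wf_converse)
  then obtain z where "z \<in> X" "\<And>y. (y, z) \<in> (E \<inter> X \<times> X)\<inverse> \<Longrightarrow> y \<notin> X"
    using wfE_min assms(3) by metis
  then show ?thesis by blast
qed

lemma acyc_irr: "acyclic (E \<inter> X \<times> X) \<Longrightarrow> z \<in> X \<Longrightarrow> (z, z) \<notin> E"
  by (meson IntI acyclic_def mem_Sigma_iff r_into_trancl')

lemma embed_acyclic:
  assumes T: "tournament VT ET"
  shows "finite X \<Longrightarrow> acyclic (E \<inter> X \<times> X) \<Longrightarrow> card X \<le> Suc k \<Longrightarrow> 2 ^ k \<le> card S \<Longrightarrow> S \<subseteq> VT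
    \<Longrightarrow> \<exists>g. inj_on g X \<and> g ` X \<subseteq> S \<and> (\<forall>u\<in>X. \<forall>v\<in>X. (u, v) \<in> E \<longrightarrow> (g u, g v) \<in> ET)"
proof (induction k arbitrary: X S)
  case 0
  show ?case
  proof (cases "X = {}")
    case True then show ?thesis by auto
  next
    case False
    then obtain z where "z \<in> X" by auto
    with 0 have "card X = 1" using card_0_eq by fastforce
    with \<open>z \<in> X\<close> have X: "X = {z}" by (metis card_1_singletonE singletonD)
    from 0 have "S \<noteq> {}" by auto
    then obtain v where "v \<in> S" by auto
    then show ?thesis using X acyc_irr[OF "0.prems"(2), of z] by auto
  qed
next
  case (Suc k)
  show ?case
  proof (cases "X = {}")
    case True then show ?thesis by auto
  next
    case False
    then obtain z0 where z0: "z0 \<in> X" by auto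
    from Suc.prems have "S \<noteq> {}" by auto
    then obtain v where v: "v \<in> S" by auto
    have finS: "finite S" proof (rule ccontr)
      assume "infinite S" then have "card S = 0" by simp
      with Suc.prems(4) show False by simp
    qed
    have or: "oriented_graph VT ET" and tot: "\<forall>x\<in>VT. \<forall>y\<in>VT. x \<noteq> y \<longrightarrow> (x, y) \<in> ET \<or> (y, x) \<in> ET"
      using T by (auto simp: tournament_def)
    define Sp where "Sp = {w\<in>S. (v, w) \<in> ET}"
    define Sm where "Sm = {w\<in>S. (w, v) \<in> ET}"
    have vSp: "v \<notin> Sp" "v \<notin> Sm" using or by (auto simp: Sp_def Sm_def oriented_graph_def)
    have "S - {v} \<subseteq> Sp \<union> Sm" using tot Suc.prems(5) v by (auto simp: Sp_def Sm_def)
    then have "card (S - {v}) \<le> card Sp + card Sm"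
    proof -
      have "finite (Sp \<union> Sm)" using finS by (auto simp: Sp_def Sm_def)
      then have "card (S - {v}) \<le> card (Sp \<union> Sm)" using \<open>S - {v} \<subseteq> Sp \<union> Sm\<close> by (rule card_mono)
      also have "\<dots> \<le> card Sp + card Sm" by (rule card_Un_le)
      finally show ?thesis .
    qed
    moreover have "card (S - {v}) = card S - 1" using v finS by simp
    ultimately have "card Sp + card Sm \<ge> 2 ^ Suc k - 1" using Suc.prems(4) by linarith
    then have big: "card Sp \<ge> 2 ^ k \<or> card Sm \<ge> 2 ^ k" by auto
    have XS: "finite (X - {z})" "acyclic (E \<inter> (X - {z}) \<times> (X - {z}))" "card (X - {z}) \<le> Suc k"
      if "z \<in> X" for z
      using Suc.prems(1,2,3) that
      by (auto intro: acyclic_subset)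
    have SpS: "Sp \<subseteq> VT" "Sm \<subseteq> VT" using Suc.prems(5) by (auto simp: Sp_def Sm_def)
    from big show ?thesis
    proof
      assume b: "card Sp \<ge> 2 ^ k"
      obtain z where z: "z \<in> X" "\<forall>y\<in>X. (y, z) \<notin> E"
        using source_exists[OF Suc.prems(1,2) z0] by blast
      obtain g where g: "inj_on g (X - {z})" "g ` (X - {z}) \<subseteq> Sp"
        "\<forall>u\<in>X - {z}. \<forall>w\<in>X - {z}. (u, w) \<in> E \<longrightarrow> (g u, g w) \<in> ET"
        using Suc.IH[OF XS[OF z(1)] b SpS(1)] by blast
      define g' where "g' = g(z := v)"
      have "inj_on g' X"
      proof -
        have e: "g' ` (X - {z}) = g ` (X - {z})" by (auto simp: g'_def)
        have "inj_on g' (X - {z})" using g(1) inj_on_cong[of "X - {z}" g' g] by (auto simp: g'_def)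
        moreover have "g' z \<notin> g' ` (X - {z})" using e g(2) vSp by (auto simp: g'_def)
        moreover have "X = insert z (X - {z})" using z(1) by auto
        ultimately show ?thesis by (metis Diff_idemp inj_on_insert)
      qed
      moreover have "g' ` X \<subseteq> S" using g(2) v z(1) by (auto simp: g'_def Sp_def)
      moreover have "\<forall>u\<in>X. \<forall>w\<in>X. (u, w) \<in> E \<longrightarrow> (g' u, g' w) \<in> ET"
        using g z acyc_irr[OF Suc.prems(2)] by (auto simp: g'_def Sp_def image_subset_iff)
      ultimately show ?thesis by blast
    next
      assume b: "card Sm \<ge> 2 ^ k"
      obtain z where z: "z \<in> X" "\<forall>y\<in>X. (z, y) \<notin> E"
        using sink_exists[OF Suc.prems(1,2) z0] by blast
      obtain g where g: "inj_on g (X - {z})" "g ` (X - {z}) \<subseteq> Sm"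
        "\<forall>u\<in>X - {z}. \<forall>w\<in>X - {z}. (u, w) \<in> E \<longrightarrow> (g u, g w) \<in> ET"
        using Suc.IH[OF XS[OF z(1)] b SpS(2)] by blast
      define g' where "g' = g(z := v)"
      have "inj_on g' X"
      proof -
        have e: "g' ` (X - {z}) = g ` (X - {z})" by (auto simp: g'_def)
        have "inj_on g' (X - {z})" using g(1) inj_on_cong[of "X - {z}" g' g] by (auto simp: g'_def)
        moreover have "g' z \<notin> g' ` (X - {z})" using e g(2) vSp by (auto simp: g'_def)
        moreover have "X = insert z (X - {z})" using z(1) by auto
        ultimately show ?thesis by (metis Diff_idemp inj_on_insert)
      qed
      moreover have "g' ` X \<subseteq> S" using g(2) v z(1) by (auto simp: g'_def Sm_def)
      moreover have "\<forall>u\<in>X. \<forall>w\<in>X. (u, w) \<in> E \<longrightarrow> (g' u, g' w) \<in> ET"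
        using g z acyc_irr[OF Suc.prems(2)] by (auto simp: g'_def Sm_def image_subset_iff)
      ultimately show ?thesis by blast
    qed
  qed
qed



lemma card_supsets:
  assumes "finite A" "B \<subseteq> A" "card B \<le> m"
  shows "card {S. S \<subseteq> A \<and> card S = m \<and> B \<subseteq> S} = (card A - card B) choose (m - card B)"
proof -
  have fB: "finite B" using assms finite_subset by blast
  have "bij_betw (\<lambda>S. S - B) {S. S \<subseteq> A \<and> card S = m \<and> B \<subseteq> S} {T. T \<subseteq> A - B \<and> card T = m - card B}"
  proof (rule bij_betw_byWitness[where f' = "\<lambda>T. T \<union> B"])
    show "\<forall>S\<in>{S. S \<subseteq> A \<and> card S = m \<and> B \<subseteq> S}. S - B \<union> B = S" by auto
    show "\<forall>T\<in>{T. T \<subseteq> A - B \<and> card T = m - card B}. T \<union> B - B = T" by auto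
    show "(\<lambda>S. S - B) ` {S. S \<subseteq> A \<and> card S = m \<and> B \<subseteq> S} \<subseteq> {T. T \<subseteq> A - B \<and> card T = m - card B}"
      using fB assms(1) by (auto simp: card_Diff_subset)
    show "(\<lambda>T. T \<union> B) ` {T. T \<subseteq> A - B \<and> card T = m - card B} \<subseteq> {S. S \<subseteq> A \<and> card S = m \<and> B \<subseteq> S}"
    proof (rule image_subsetI)
      fix T assume "T \<in> {T. T \<subseteq> A - B \<and> card T = m - card B}"
      then have T: "T \<subseteq> A - B" "m - card B = card T" by auto
      have "finite T" using T assms(1) finite_subset by blast
      moreover have "T \<inter> B = {}" using T by auto
      ultimately have "card (T \<union> B) = card T + card B" using fB card_Un_disjoint by blast
      then show "T \<union> B \<in> {S. S \<subseteq> A \<and> card S = m \<and> B \<subseteq> S}" using T assms(2,3) by auto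
    qed
  qed
  then have "card {S. S \<subseteq> A \<and> card S = m \<and> B \<subseteq> S} = card {T. T \<subseteq> A - B \<and> card T = m - card B}"
    by (rule bij_betw_same_card)
  also have "\<dots> = card (A - B) choose (m - card B)" using assms(1) by (simp add: n_subsets)
  also have "card (A - B) = card A - card B" using assms fB by (simp add: card_Diff_subset)
  finally show ?thesis .
qed

lemma binom_ratio:
  fixes n m :: nat
  shows "b \<le> m \<Longrightarrow> m \<le> n \<Longrightarrow> real ((n - b) choose (m - b)) * real n ^ b \<le> real (n choose m) * real m ^ b"
proof (induction b)
  case 0 then show ?case by simp
next
  case (Suc b)
  define N' where "N' = n - b"
  define M' where "M' = m - b"
  have M'1: "M' \<ge> 1" "N' \<ge> M'" using Suc.prems by (auto simp: M'_def N'_def)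
  have id: "real ((N' - 1) choose (M' - 1)) * real N' = real M' * real (N' choose M')"
  proof -
    obtain c where c: "M' = Suc c" using M'1 by (metis Suc_pred' less_eq_Suc_le One_nat_def)
    have "Suc c * (N' choose Suc c) = N' * ((N' - 1) choose c)" by (rule binomial_absorption)
    then show ?thesis using c by (metis diff_Suc_1 mult.commute of_nat_mult)
  qed
  have IH: "real (N' choose M') * real n ^ b \<le> real (n choose m) * real m ^ b"
    using Suc by (simp add: N'_def M'_def)
  have e1: "n - Suc b = N' - 1" "m - Suc b = M' - 1" by (auto simp: N'_def M'_def)
  have key: "real M' * real n \<le> real N' * real m"
  proof -
    have a: "n * (m - b) = n*m - n*b" "m*(n-b) = m*n - m*b" by (simp_all add: diff_mult_distrib2)
    have "m*b \<le> n*b" using Suc.prems by simp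
    then have "n*m - n*b \<le> m*n - m*b" by (metis diff_le_mono2 mult.commute)
    then have "M' * n \<le> N' * m" unfolding M'_def N'_def using a by (simp add: mult.commute)
    then show ?thesis by (metis of_nat_le_iff of_nat_mult)
  qed
  have Npos: "real N' > 0" using M'1 by simp
  let ?c = "real ((N' - 1) choose (M' - 1))"
  have "?c * real n ^ Suc b * real N' = real M' * real n * (real (N' choose M') * real n ^ b)"
    using id by (simp add: algebra_simps)
  also have "\<dots> \<le> real N' * real m * (real (n choose m) * real m ^ b)"
    by (rule mult_mono[OF key IH]) auto
  also have "\<dots> = real (n choose m) * real m ^ Suc b * real N'" by (simp add: algebra_simps)
  finally have "?c * real n ^ Suc b \<le> real (n choose m) * real m ^ Suc b"
    using Npos by simp
  then show ?case using e1 by simp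
qed



lemma main:
  fixes VH :: "nat set" and EH and l :: nat and HP :: "nat \<Rightarrow> nat set" and VT :: "nat set" and ET
    and W :: "nat \<Rightarrow> nat set" and h :: nat and \<eta> :: real
  defines "m \<equiv> (2::nat) ^ (h - 1)"
  assumes hpos: "h > 0" and etadef: "\<eta> = 1 / (2 * real h ^ 2 * real m ^ 2)"
    and finVH: "finite VH" and cardVH: "card VH = h" and orH: "oriented_graph VH EH"
    and HPne: "\<forall>i<l. HP i \<noteq> {}" and HPun: "(\<Union>i<l. HP i) = VH"
    and HPdisj: "\<forall>i<l. \<forall>j<l. i \<noteq> j \<longrightarrow> HP i \<inter> HP j = {}"
    and HPac: "\<forall>i<l. induces_acyclic EH (HP i)"
    and HParr: "\<forall>i<l. \<forall>j<l. i < j \<longrightarrow> arr EH (HP i) (HP j) \<or> arr EH (HP j) (HP i)"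
    and T: "tournament VT ET"
    and WVT: "\<forall>i<l. W i \<subseteq> VT"
    and Wdisj: "\<forall>i<l. \<forall>j<l. i \<noteq> j \<longrightarrow> W i \<inter> W j = {}"
    and Wcard: "\<forall>i<l. card (W i) \<ge> 2 ^ (h - 1)"
    and Wdens: "\<forall>i<l. \<forall>j<l. i \<noteq> j \<longrightarrow> arr EH (HP i) (HP j) \<longrightarrow> dens ET (W i) (W j) \<ge> 1 - \<eta>"
  shows "real (card (copies VH EH VT ET))
            \<ge> (1 / (2 * real m ^ h * real h ^ h)) * (\<Prod>i<l. real (card (W i)) ^ card (HP i))"
proof -
  define n where "n k = card (W k)" for k
  have m1: "m \<ge> 1" by (simp add: m_def)
  have finVT: "finite VT" using T by (simp add: tournament_def)
  have finW: "finite (W k)" if "k < l" for k using WVT that finVT finite_subset by blast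
  have nm: "n k \<ge> m" if "k < l" for k using Wcard that by (simp add: n_def m_def)
  have HPsub: "HP k \<subseteq> VH" if "k < l" for k using HPun that by auto
  have finHP: "finite (HP k)" if "k < l" for k using HPsub that finVH finite_subset by blast
  have hm: "h \<le> m"
  proof -
    have "h - 1 < 2 ^ (h - 1)" by (rule less_exp)
    moreover have "h = Suc (h - 1)" using hpos by simp
    ultimately show ?thesis unfolding m_def by linarith
  qed
  have HPh: "card (HP k) \<le> h" if "k < l" for k using HPsub[OF that] finVH cardVH card_mono by metis
  have HPm: "card (HP k) \<le> m" if "k < l" for k using HPh[OF that] hm by simp
  have sumHP: "(\<Sum>k<l. card (HP k)) = h"
  proof -
    have "card (\<Union>k<l. HP k) = (\<Sum>k<l. card (HP k))"
      by (rule card_UN_disjoint) (use finHP HPdisj in auto)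
    then show ?thesis using HPun cardVH by simp
  qed
  have lh: "l \<le> h"
  proof -
    have "(\<Sum>k<l. (1::nat)) \<le> (\<Sum>k<l. card (HP k))"
      by (rule sum_mono) (use HPne finHP in \<open>auto simp: Suc_le_eq card_gt_0_iff\<close>)
    then show ?thesis using sumHP by simp
  qed

  define Fam where "Fam B k = {S. S \<subseteq> W k \<and> card S = m \<and> B k \<subseteq> S}" for B :: "nat \<Rightarrow> nat set" and k
  define TT where "TT B = PiE {..<l} (Fam B)" for B
  define Tup where "Tup = TT (\<lambda>_. {})"
  define N where "N = card Tup"
  have cardTT: "card (TT B) = (\<Prod>k<l. (n k - card (B k)) choose (m - card (B k)))"
    if hB: "\<forall>k<l. B k \<subseteq> W k \<and> card (B k) \<le> m" for B
  proof -
    have a: "B k \<subseteq> W k" "card (B k) \<le> m" if "k < l" for k using that hB by auto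
    show ?thesis unfolding TT_def Fam_def n_def
      by (subst card_PiE) (auto intro!: prod.cong card_supsets finW a)
  qed
  have Ndef: "N = (\<Prod>k<l. n k choose m)"
    using cardTT[of "\<lambda>_. {}"] by (simp add: N_def Tup_def)
  have Npos: "real N > 0"
    unfolding Ndef of_nat_prod using nm by (intro prod_pos) (simp add: zero_less_binomial)
  have finTT: "finite (TT B)" for B
    unfolding TT_def Fam_def
    by (rule finite_PiE) (auto intro: finite_subset[of _ "Pow (W _)"] finW)
  have finTup: "finite Tup" unfolding Tup_def by (rule finTT)
  have TTbound: "real (card (TT B)) * (\<Prod>k<l. real (n k) ^ card (B k)) \<le> real N * real m ^ (\<Sum>k<l. card (B k))"
    if "\<forall>k<l. B k \<subseteq> W k \<and> card (B k) \<le> m" for B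
  proof -
    have "real (card (TT B)) * (\<Prod>k<l. real (n k) ^ card (B k))
        = (\<Prod>k<l. real ((n k - card (B k)) choose (m - card (B k))) * real (n k) ^ card (B k))"
      using cardTT[OF that] by (simp add: prod.distrib)
    also have "\<dots> \<le> (\<Prod>k<l. real (n k choose m) * real m ^ card (B k))"
      by (rule prod_mono) (use that nm binom_ratio in auto)
    also have "\<dots> = real N * real m ^ (\<Sum>k<l. card (B k))"
      by (simp add: Ndef prod.distrib power_sum)
    finally show ?thesis .
  qed

  define Emb where "Emb = {f \<in> VH \<rightarrow>\<^sub>E VT. inj_on f VH \<and> (\<forall>(u, v)\<in>EH. (f u, f v) \<in> ET) \<and> (\<forall>i<l. f ` HP i \<subseteq> W i)}"
  have finEmb: "finite Emb" unfolding Emb_def using finVH finVT by (auto intro: finite_PiE finite_subset[of _ "VH \<rightarrow>\<^sub>E VT"])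
  define \<psi> where "\<psi> f = (f ` VH, (\<lambda>(u, v). (f u, f v)) ` EH)" for f :: "nat \<Rightarrow> nat"
  have stepD: "real (card Emb) \<le> real h ^ h * real (card (copies VH EH VT ET))"
  proof -
    have sub: "\<psi> ` Emb \<subseteq> copies VH EH VT ET"
      unfolding copies_def Emb_def \<psi>_def by (auto simp: PiE_iff)
    have fincop: "finite (copies VH EH VT ET)"
    proof (rule finite_subset)
      show "copies VH EH VT ET \<subseteq> Pow VT \<times> Pow (VT \<times> VT)"
        unfolding copies_def using T by (auto simp: tournament_def oriented_graph_def)
      show "finite (Pow VT \<times> Pow (VT \<times> VT))" using finVT by simp
    qed
    have "Emb \<subseteq> (\<Union>c\<in>\<psi> ` Emb. VH \<rightarrow>\<^sub>E fst c)"
    proof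
      fix f assume f: "f \<in> Emb"
      have "f \<in> VH \<rightarrow>\<^sub>E fst (\<psi> f)" using f unfolding Emb_def \<psi>_def by (auto simp: PiE_iff)
      then show "f \<in> (\<Union>c\<in>\<psi> ` Emb. VH \<rightarrow>\<^sub>E fst c)" using f by blast
    qed
    then have "card Emb \<le> card (\<Union>c\<in>\<psi> ` Emb. VH \<rightarrow>\<^sub>E fst c)"
      by (rule card_mono[rotated]) (use finEmb finVH in \<open>auto intro!: finite_PiE simp: \<psi>_def\<close>)
    also have "\<dots> \<le> (\<Sum>c\<in>\<psi> ` Emb. card (VH \<rightarrow>\<^sub>E fst c))"
      by (rule card_UN_le) (use finEmb in simp)
    also have "\<dots> = (\<Sum>c\<in>\<psi> ` Emb. h ^ h)"
    proof (rule sum.cong)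
      fix c assume "c \<in> \<psi> ` Emb"
      then obtain f where f: "f \<in> Emb" "c = \<psi> f" by auto
      then have "card (fst c) = h" using cardVH by (auto simp: Emb_def \<psi>_def card_image)
      then show "card (VH \<rightarrow>\<^sub>E fst c) = h ^ h" using finVH cardVH by (simp add: card_PiE)
    qed simp
    also have "\<dots> = card (\<psi> ` Emb) * h ^ h" by simp
    also have "\<dots> \<le> card (copies VH EH VT ET) * h ^ h"
      using card_mono[OF fincop sub] by simp
    finally have "card Emb \<le> card (copies VH EH VT ET) * h ^ h" .
    then show ?thesis by (metis of_nat_le_iff of_nat_mult of_nat_power mult.commute)
  qed
  define good where "good t \<longleftrightarrow> (\<forall>i<l. \<forall>j<l. i \<noteq> j \<longrightarrow> arr EH (HP i) (HP j) \<longrightarrow> (\<forall>x\<in>t i. \<forall>y\<in>t j. (x, y) \<in> ET))" for t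
  define Good where "Good = {t \<in> Tup. good t}"
  define idx where "idx u = (THE i. i < l \<and> u \<in> HP i)" for u
  have idx: "idx u = i" if "i < l" "u \<in> HP i" for u i
    unfolding idx_def using that HPdisj by (intro the_equality) auto
  have idxVH: "idx u < l \<and> u \<in> HP (idx u)" if uVH: "u \<in> VH" for u
  proof -
    obtain i where "i < l" "u \<in> HP i" using uVH HPun by auto
    then show ?thesis using idx by simp
  qed
  have Tupmem: "t k \<subseteq> W k \<and> card (t k) = m" if "t \<in> Tup" "k < l" for t k
    using that unfolding Tup_def TT_def Fam_def by (auto simp: PiE_iff)
  have stepA: "Good \<subseteq> (\<Union>f\<in>Emb. TT (\<lambda>k. f ` HP k))"
  proof
    fix t assume "t \<in> Good"
    then have tT: "t \<in> Tup" and tg: "good t" by (auto simp: Good_def)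
    have ex: "\<exists>g. inj_on g (HP i) \<and> g ` HP i \<subseteq> t i \<and>
        (\<forall>u\<in>HP i. \<forall>v\<in>HP i. (u, v) \<in> EH \<longrightarrow> (g u, g v) \<in> ET)" if i: "i < l" for i
    proof (rule embed_acyclic[OF T])
      show "finite (HP i)" using finHP i .
      show "acyclic (EH \<inter> HP i \<times> HP i)" using HPac i by (simp add: induces_acyclic_def)
      show "card (HP i) \<le> Suc (h - 1)" using HPh[OF i] hpos by simp
      show "2 ^ (h - 1) \<le> card (t i)" using Tupmem[OF tT i] by (simp add: m_def)
      show "t i \<subseteq> VT" using Tupmem[OF tT i] WVT i by blast
    qed
    have "\<forall>i. \<exists>g. i < l \<longrightarrow> inj_on g (HP i) \<and> g ` HP i \<subseteq> t i \<and>
        (\<forall>u\<in>HP i. \<forall>v\<in>HP i. (u, v) \<in> EH \<longrightarrow> (g u, g v) \<in> ET)"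
      using ex by blast
    then obtain G where G0: "\<forall>i. i < l \<longrightarrow> inj_on (G i) (HP i) \<and> G i ` HP i \<subseteq> t i \<and>
        (\<forall>u\<in>HP i. \<forall>v\<in>HP i. (u, v) \<in> EH \<longrightarrow> (G i u, G i v) \<in> ET)"
      by (rule choice[THEN exE])
    have G: "inj_on (G i) (HP i) \<and> G i ` HP i \<subseteq> t i \<and>
        (\<forall>u\<in>HP i. \<forall>v\<in>HP i. (u, v) \<in> EH \<longrightarrow> (G i u, G i v) \<in> ET)" if "i < l" for i
      using G0 that by blast
    define f where "f = restrict (\<lambda>u. G (idx u) u) VH"
    have fval: "f u = G i u" if "i < l" "u \<in> HP i" for u i
      using that idx HPsub by (auto simp: f_def)
    have fW: "f u \<in> t i" if "i < l" "u \<in> HP i" for u i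
      using fval[OF that] G[OF that(1)] that(2) by auto
    have fWW: "f u \<in> W i" if "i < l" "u \<in> HP i" for u i
      using fW[OF that] Tupmem[OF tT that(1)] by auto
    have "f \<in> Emb"
    proof -
      have "f \<in> VH \<rightarrow>\<^sub>E VT"
        using fWW idxVH WVT unfolding f_def by (auto simp: PiE_iff) (metis subsetD fval)
      moreover have "inj_on f VH"
      proof (rule inj_onI)
        fix u v assume uv: "u \<in> VH" "v \<in> VH" "f u = f v"
        show "u = v"
        proof (cases "idx u = idx v")
          case True
          then show ?thesis using uv idxVH[OF uv(1)] idxVH[OF uv(2)] G fval
            by (metis inj_on_def)
        next
          case False
          then show ?thesis using uv idxVH[OF uv(1)] idxVH[OF uv(2)] fWW Wdisj
            by (metis IntI empty_iff)
        qed
      qed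
      moreover have "\<forall>(u, v)\<in>EH. (f u, f v) \<in> ET"
      proof safe
        fix u v assume e: "(u, v) \<in> EH"
        then have uv: "u \<in> VH" "v \<in> VH" using orH by (auto simp: oriented_graph_def)
        obtain i j where ij: "i = idx u" "j = idx v" by blast
        have i: "i < l" "u \<in> HP i" and j: "j < l" "v \<in> HP j" using idxVH uv ij by auto
        show "(f u, f v) \<in> ET"
        proof (cases "i = j")
          case True
          then show ?thesis using G[OF i(1)] i j e fval by auto
        next
          case False
          have "\<not> arr EH (HP j) (HP i)" using e i j by (auto simp: arr_def)
          then have "arr EH (HP i) (HP j)" using HParr i(1) j(1) False
            by (metis linorder_neqE_nat)
          then show ?thesis using tg False i j fW unfolding good_def by blast
        qed
      qed
      moreover have "\<forall>i<l. f ` HP i \<subseteq> W i" using fWW by auto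
      ultimately show ?thesis unfolding Emb_def by blast
    qed
    moreover have "t \<in> TT (\<lambda>k. f ` HP k)"
      using tT fW unfolding Tup_def TT_def Fam_def by (auto simp: PiE_iff)
    ultimately show "t \<in> (\<Union>f\<in>Emb. TT (\<lambda>k. f ` HP k))" by blast
  qed
  define Pn where "Pn = (\<Prod>k<l. real (n k) ^ card (HP k))"
  have Pnpos: "Pn > 0" unfolding Pn_def using nm m1
  proof (intro prod_pos)
    fix k assume "k \<in> {..<l}"
    then have "n k > 0" using nm m1 by (meson le_trans lessThan_iff less_le_trans zero_less_one)
    then show "0 < real (n k) ^ card (HP k)" by simp
  qed
  have fibre: "real (card (TT (\<lambda>k. f ` HP k))) * Pn \<le> real N * real m ^ h" if f: "f \<in> Emb" for f
  proof -
    have ci: "card (f ` HP k) = card (HP k)" if "k < l" for k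
      using f HPsub[OF that] unfolding Emb_def by (auto intro: card_image inj_on_subset)
    have hB: "\<forall>k<l. f ` HP k \<subseteq> W k \<and> card (f ` HP k) \<le> m"
      using f ci HPm unfolding Emb_def by auto
    have "(\<Prod>k<l. real (n k) ^ card (f ` HP k)) = Pn" unfolding Pn_def by (rule prod.cong) (auto simp: ci)
    moreover have "(\<Sum>k<l. card (f ` HP k)) = (\<Sum>k<l. card (HP k))" by (rule sum.cong) (auto simp: ci)
    ultimately show ?thesis using TTbound[OF hB] sumHP by simp
  qed
  have stepB: "real (card Good) * Pn \<le> real (card Emb) * (real N * real m ^ h)"
  proof -
    have "card Good \<le> card (\<Union>f\<in>Emb. TT (\<lambda>k. f ` HP k))"
      by (rule card_mono[OF _ stepA]) (use finEmb finTT in auto)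
    also have "\<dots> \<le> (\<Sum>f\<in>Emb. card (TT (\<lambda>k. f ` HP k)))" by (rule card_UN_le[OF finEmb])
    finally have "real (card Good) \<le> real (\<Sum>f\<in>Emb. card (TT (\<lambda>k. f ` HP k)))"
      by (simp only: of_nat_le_iff)
    then have "real (card Good) * Pn \<le> (\<Sum>f\<in>Emb. real (card (TT (\<lambda>k. f ` HP k)))) * Pn"
      using Pnpos of_nat_sum[of "\<lambda>f. card (TT (\<lambda>k. f ` HP k))" Emb] by (intro mult_right_mono) simp_all
    also have "\<dots> = (\<Sum>f\<in>Emb. real (card (TT (\<lambda>k. f ` HP k))) * Pn)" by (simp add: sum_distrib_right)
    also have "\<dots> \<le> (\<Sum>f\<in>Emb. real N * real m ^ h)" by (rule sum_mono) (rule fibre)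
    also have "\<dots> = real (card Emb) * (real N * real m ^ h)" by simp
    finally show ?thesis .
  qed
  have stepC: "real (card (Tup - Good)) \<le> real N / 2"
  proof -
    define P where "P = {(i, j). i < l \<and> j < l \<and> i \<noteq> j \<and> arr EH (HP i) (HP j)}"
    define Bp where "Bp p = {(x, y) \<in> W (fst p) \<times> W (snd p). (x, y) \<notin> ET}" for p :: "nat \<times> nat"
    define BB where "BB p q = (\<lambda>k. (if k = fst p then {fst q} else {}) \<union> (if k = snd p then {snd q} else {}))"
      for p :: "nat \<times> nat" and q :: "nat \<times> nat"
    have finP: "finite P" by (rule finite_subset[of _ "{..<l} \<times> {..<l}"]) (auto simp: P_def)
    have cardP: "card P \<le> l * l"
    proof -
      have "card P \<le> card ({..<l} \<times> {..<l})" by (rule card_mono) (auto simp: P_def)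
      then show ?thesis by simp
    qed
    have finBp: "finite (Bp p)" if "p \<in> P" for p
      using that finW by (auto simp: P_def Bp_def intro: finite_subset[of _ "W (fst p) \<times> W (snd p)"])
    have cover: "Tup - Good \<subseteq> (\<Union>p\<in>P. \<Union>q\<in>Bp p. TT (BB p q))"
    proof
      fix t assume "t \<in> Tup - Good"
      then have tT: "t \<in> Tup" and "\<not> good t" by (auto simp: Good_def)
      then obtain i j x y where ij: "i < l" "j < l" "i \<noteq> j" "arr EH (HP i) (HP j)"
        and xy: "x \<in> t i" "y \<in> t j" "(x, y) \<notin> ET"
        unfolding good_def by blast
      have "(i, j) \<in> P" using ij by (simp add: P_def)
      moreover have "(x, y) \<in> Bp (i, j)" using xy Tupmem[OF tT ij(1)] Tupmem[OF tT ij(2)]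
        by (auto simp: Bp_def)
      moreover have "t \<in> TT (BB (i, j) (x, y))"
        using tT xy unfolding Tup_def TT_def Fam_def BB_def by (auto simp: PiE_iff)
      ultimately show "t \<in> (\<Union>p\<in>P. \<Union>q\<in>Bp p. TT (BB p q))" by blast
    qed
    have Qbound: "real (card (TT (BB p q))) * (real (n (fst p)) * real (n (snd p))) \<le> real N * real m ^ 2"
      if p: "p \<in> P" and q: "q \<in> Bp p" for p q
    proof -
      obtain i j where pij: "p = (i, j)" by (cases p)
      obtain x y where qxy: "q = (x, y)" by (cases q)
      have ij: "i < l" "j < l" "i \<noteq> j" using p pij by (auto simp: P_def)
      have xy: "x \<in> W i" "y \<in> W j" using q pij qxy by (auto simp: Bp_def)
      have cB: "card (BB p q k) = (if k = i then 1 else 0) + (if k = j then 1 else 0)" for k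
        using ij(3) by (auto simp: BB_def pij qxy)
      have hB: "\<forall>k<l. BB p q k \<subseteq> W k \<and> card (BB p q k) \<le> m"
        using xy m1 ij(3) by (auto simp: BB_def pij qxy)
      have "(\<Prod>k<l. real (n k) ^ card (BB p q k))
          = (\<Prod>k<l. (if k = i then real (n k) else 1) * (if k = j then real (n k) else 1))"
        by (rule prod.cong) (auto simp: cB ij(3))
      also have "\<dots> = real (n i) * real (n j)" using ij by (simp add: prod.distrib)
      finally have e1: "(\<Prod>k<l. real (n k) ^ card (BB p q k)) = real (n i) * real (n j)" .
      have e2: "(\<Sum>k<l. card (BB p q k)) = 2" using ij by (simp add: cB sum.distrib)
      show ?thesis using TTbound[OF hB] e1 e2 pij by simp
    qed
    have Bpbound: "real (card (Bp p)) \<le> \<eta> * (real (n (fst p)) * real (n (snd p)))" if p: "p \<in> P" for p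
    proof -
      obtain i j where pij: "p = (i, j)" by (cases p)
      have ij: "i < l" "j < l" "i \<noteq> j" "arr EH (HP i) (HP j)" using p pij by (auto simp: P_def)
      define G where "G = {q \<in> W i \<times> W j. q \<in> ET}"
      have fin: "finite (W i \<times> W j)" using finW ij by auto
      have un: "W i \<times> W j = G \<union> Bp p" "G \<inter> Bp p = {}" by (auto simp: G_def Bp_def pij)
      have "card (W i \<times> W j) = card G + card (Bp p)"
        using un fin by (metis card_Un_disjoint finite_Un)
      then have c: "real (n i) * real (n j) = real (card G) + real (card (Bp p))"
        by (simp add: n_def card_cartesian_product) (metis of_nat_add of_nat_mult)
      have npos: "real (n i) * real (n j) > 0" using nm ij m1 by (simp add: Suc_le_eq less_le_trans)
      have "1 - \<eta> \<le> real (card G) / (real (n i) * real (n j))"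
        using Wdens ij unfolding dens_def G_def n_def by auto
      then have "(1 - \<eta>) * (real (n i) * real (n j)) \<le> real (card G)"
        using npos by (simp add: pos_le_divide_eq)
      then show ?thesis using c pij by (simp add: algebra_simps)
    qed
    have Npos': "real N \<ge> 0" by simp
    have "real (card (Tup - Good)) \<le> real (card (\<Union>p\<in>P. \<Union>q\<in>Bp p. TT (BB p q)))"
      using card_mono[OF _ cover] finP finBp finTT by auto
    also have "\<dots> \<le> (\<Sum>p\<in>P. real (card (\<Union>q\<in>Bp p. TT (BB p q))))"
      using card_UN_le[OF finP, of "\<lambda>p. \<Union>q\<in>Bp p. TT (BB p q)"] by (simp flip: of_nat_sum)
    also have "\<dots> \<le> (\<Sum>p\<in>P. \<eta> * real N * real m ^ 2)"
    proof (rule sum_mono)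
      fix p assume p: "p \<in> P"
      have np: "real (n (fst p)) * real (n (snd p)) > 0"
        using p nm m1 by (auto simp: P_def Suc_le_eq less_le_trans)
      have "real (card (\<Union>q\<in>Bp p. TT (BB p q))) \<le> (\<Sum>q\<in>Bp p. real (card (TT (BB p q))))"
        using card_UN_le[OF finBp[OF p], of "\<lambda>q. TT (BB p q)"] by (simp flip: of_nat_sum)
      also have "\<dots> \<le> (\<Sum>q\<in>Bp p. real N * real m ^ 2 / (real (n (fst p)) * real (n (snd p))))"
        by (rule sum_mono) (use Qbound[OF p] np in \<open>simp add: pos_le_divide_eq\<close>)
      also have "\<dots> = real (card (Bp p)) * (real N * real m ^ 2 / (real (n (fst p)) * real (n (snd p))))"
        by simp
      also have "\<dots> \<le> \<eta> * (real (n (fst p)) * real (n (snd p))) * (real N * real m ^ 2 / (real (n (fst p)) * real (n (snd p))))"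
        by (rule mult_right_mono[OF Bpbound[OF p]]) simp
      also have "\<dots> = \<eta> * real N * real m ^ 2"
      proof -
        have "real (n (fst p)) * real (n (snd p)) \<noteq> 0" using np by (metis order_less_irrefl)
        then show ?thesis by (simp add: field_simps)
      qed
      finally show "real (card (\<Union>q\<in>Bp p. TT (BB p q))) \<le> \<eta> * real N * real m ^ 2" .
    qed
    also have "\<dots> = real (card P) * (\<eta> * real N * real m ^ 2)" by simp
    also have "\<dots> \<le> real (h * h) * (\<eta> * real N * real m ^ 2)"
    proof (rule mult_right_mono)
      have "card P \<le> h * h" using cardP lh mult_le_mono by (meson le_trans)
      then show "real (card P) \<le> real (h * h)" by (simp only: of_nat_le_iff)
      show "0 \<le> \<eta> * real N * real m ^ 2" using etadef by simp
    qed
    also have "\<dots> = real N / 2" using etadef hpos m1 by (simp add: field_simps power2_eq_square)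
    finally show ?thesis .
  qed
  have "real N = real (card Good) + real (card (Tup - Good))"
  proof -
    have "Good \<subseteq> Tup" by (auto simp: Good_def)
    moreover have fG: "finite Good" using finTup \<open>Good \<subseteq> Tup\<close> finite_subset by blast
    ultimately have "card (Tup - Good) = card Tup - card Good" by (rule card_Diff_subset[rotated])
    moreover have "card Good \<le> card Tup" using finTup \<open>Good \<subseteq> Tup\<close> by (rule card_mono)
    ultimately have "card Tup = card Good + card (Tup - Good)" by simp
    then show ?thesis by (simp add: N_def)
  qed
  with stepC have Ng: "real N / 2 \<le> real (card Good)" by simp
  have "real N / 2 * Pn \<le> real (card Emb) * (real N * real m ^ h)"
    using mult_right_mono[OF Ng, of Pn] Pnpos stepB by linarith
  then have "Pn \<le> 2 * real m ^ h * real (card Emb)"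
    using Npos by (simp add: field_simps)
  also have "\<dots> \<le> 2 * real m ^ h * (real h ^ h * real (card (copies VH EH VT ET)))"
    using stepD by (intro mult_left_mono) auto
  finally have fin: "Pn \<le> (2 * real m ^ h * real h ^ h) * real (card (copies VH EH VT ET))"
    by (simp add: mult.assoc)
  have pos: "2 * real m ^ h * real h ^ h > 0" using m1 hpos by simp
  show ?thesis using fin pos unfolding Pn_def n_def by (simp add: field_simps)
qed
theorem lemma3p3:
  "\<forall>h::nat. h > 0 \<longrightarrow> (\<exists>\<eta>::real. \<eta> > 0 \<and> (\<exists>\<alpha>::real. \<alpha> > 0 \<and>
     (\<forall>(VH::nat set) EH (l::nat) (HP::nat \<Rightarrow> nat set) (VT::nat set) ET (W::nat \<Rightarrow> nat set).
        finite VH \<and> card VH = h \<and> oriented_graph VH EH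
      \<and> (\<forall>i<l. HP i \<noteq> {}) \<and> (\<Union>i<l. HP i) = VH
      \<and> (\<forall>i<l. \<forall>j<l. i \<noteq> j \<longrightarrow> HP i \<inter> HP j = {})
      \<and> (\<forall>i<l. induces_acyclic EH (HP i))
      \<and> (\<forall>i<l. \<forall>j<l. i < j \<longrightarrow> arr EH (HP i) (HP j) \<or> arr EH (HP j) (HP i))
      \<and> tournament VT ET
      \<and> (\<forall>i<l. W i \<subseteq> VT)
      \<and> (\<forall>i<l. \<forall>j<l. i \<noteq> j \<longrightarrow> W i \<inter> W j = {})
      \<and> (\<forall>i<l. card (W i) \<ge> 2 ^ (h - 1))
      \<and> (\<forall>i<l. \<forall>j<l. i \<noteq> j \<longrightarrow> arr EH (HP i) (HP j) \<longrightarrow> dens ET (W i) (W j) \<ge> 1 - \<eta>)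
      \<longrightarrow> real (card (copies VH EH VT ET))
            \<ge> \<alpha> * (\<Prod>i<l. real (card (W i)) ^ card (HP i)))))"
    apply (intro allI impI)
  subgoal for h
    apply (rule exI[of _ "1 / (2 * real h ^ 2 * real ((2::nat) ^ (h - 1)) ^ 2)"], rule conjI)
     apply simp
    apply (rule exI[of _ "1 / (2 * real ((2::nat) ^ (h - 1)) ^ h * real h ^ h)"], rule conjI)
     apply simp
    apply (intro allI impI)
    apply (elim conjE)
    apply (rule main[OF _ refl])
                  apply assumption+
    done
  done

end
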